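(* For any group $B$ and any integer $p\ge 2$, $$cw(B\wr C_p)\le \max(1,cw(B)).$$
   Context: $B\wr C_p$ is the permutational wreath product $B^p\rtimes C_p$, where the cyclic group $C_p$ acts on $\{1,\dots,p\}$ by the shift $(1,2,\dots,p)$. The commutator length of $g\in G'$ is the least $n$ such that $g$ is a product of $n$ commutators; the commutator width $cw(G)$ is the maximum of commutator lengths over elements of the derived subgroup $G'$. *)

theory Defs
  imports "HOL-Algebra.Algebra" "HOL-Library.Extended_Nat"
begin

definition commutator :: "('a, 'b) monoid_scheme \<Rightarrow> 'a \<Rightarrow> 'a \<Rightarrow> 'a" where
  "commutator G x y = x \<otimes>\<^bsub>G\<^esub> y \<otimes>\<^bsub>G\<^esub> inv\<^bsub>G\<^esub> x \<otimes>\<^bsub>G\<^esub> inv\<^bsub>G\<^esub> y"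

fun comm_prods :: "('a, 'b) monoid_scheme \<Rightarrow> nat \<Rightarrow> 'a set" where
  "comm_prods G 0 = {\<one>\<^bsub>G\<^esub>}"
| "comm_prods G (Suc n) =
     {c \<otimes>\<^bsub>G\<^esub> commutator G x y | c x y. c \<in> comm_prods G n \<and> x \<in> carrier G \<and> y \<in> carrier G}"

definition comm_length :: "('a, 'b) monoid_scheme \<Rightarrow> 'a \<Rightarrow> nat" where
  "comm_length G g = (LEAST n. g \<in> comm_prods G n)"

definition comm_width :: "('a, 'b) monoid_scheme \<Rightarrow> enat" where
  "comm_width G = (SUP g \<in> derived G (carrier G). enat (comm_length G g))"

text \<open>Permutational wreath product B wr C_p = B^p \<rtimes> C_p, coordinates indexed by
  {0..<p}, C_p = Z/pZ represented by {0..<p}, acting by the cyclic shift: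
  (k . g)(i) = g(i - k mod p).\<close>
definition wreath_cyclic :: "('a, 'b) monoid_scheme \<Rightarrow> nat \<Rightarrow> ((nat \<Rightarrow> 'a) \<times> nat) monoid" where
  "wreath_cyclic B p =
    \<lparr> carrier = ({0..<p} \<rightarrow>\<^sub>E carrier B) \<times> {0..<p},
      monoid.mult = (\<lambda>(f, a) (g, b).
                ((\<lambda>i\<in>{0..<p}. f i \<otimes>\<^bsub>B\<^esub> g ((i + p - a) mod p)), (a + b) mod p)),
      monoid.one = ((\<lambda>i\<in>{0..<p}. \<one>\<^bsub>B\<^esub>), 0) \<rparr>"

end

theory Submission
  imports Defs
begin


lemma sh_int: "a \<le> p \<Longrightarrow> int ((i + p - a) mod p) = (int i - int a) mod int p"
proof -
  assume "a \<le> p"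
  then have "int (i + p - a) = (int i - int a) + int p" by simp
  then show ?thesis by (simp add: of_nat_mod)
qed

lemma sh_sh: "(a::nat) < p \<Longrightarrow> b < p \<Longrightarrow>
   (((i + p - a) mod p) + p - b) mod p = (i + p - (a + b) mod p) mod p"
proof -
  assume ab: "a < p" "b < p"
  have "int ((((i + p - a) mod p) + p - b) mod p) = (int ((i + p - a) mod p) - int b) mod int p"
    using ab by (intro sh_int) simp
  also have "\<dots> = (int i - int a - int b) mod int p"
    using ab by (simp add: sh_int mod_diff_left_eq)
  also have "\<dots> = (int i - int ((a + b) mod p)) mod int p"
    by (simp add: of_nat_mod mod_diff_right_eq diff_diff_eq)
  also have "\<dots> = int ((i + p - (a + b) mod p) mod p)"
    using ab by (subst sh_int) auto
  finally show ?thesis by simp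
qed

lemma sh_lt: "0 < (p::nat) \<Longrightarrow> (i + p - a) mod p < p" by simp

lemma sh_zero: "(i::nat) < p \<Longrightarrow> (i + p - 0) mod p = i" by simp

lemma sh_inv: "(a::nat) < p \<Longrightarrow> i < p \<Longrightarrow> (((i + a) mod p) + p - a) mod p = i"
proof -
  assume ab: "a < p" "i < p"
  have "int ((((i + a) mod p) + p - a) mod p) = (int ((i + a) mod p) - int a) mod int p"
    using ab by (intro sh_int) simp
  also have "\<dots> = int i" using ab by (simp add: of_nat_mod mod_diff_left_eq)
  finally show ?thesis by simp
qed

lemma sh_inv2: "(a::nat) < p \<Longrightarrow> i < p \<Longrightarrow> (((i + p - a) mod p) + a) mod p = i"
proof -
  assume ab: "a < p" "i < p"
  have "int ((((i + p - a) mod p) + a) mod p) = (int ((i + p - a) mod p) + int a) mod int p"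
    by (simp add: of_nat_mod)
  also have "\<dots> = int i" using ab by (simp add: sh_int mod_add_left_eq)
  finally show ?thesis by simp
qed



locale wr = group B for B (structure) + fixes p :: nat assumes p2: "2 \<le> p"
begin

abbreviation W where "W \<equiv> wreath_cyclic B p"
abbreviation I where "I \<equiv> {0..<p}"

lemma p0: "0 < p" using p2 by simp

lemma carrier_W: "carrier W = (I \<rightarrow>\<^sub>E carrier B) \<times> I"
  by (simp add: wreath_cyclic_def)
lemma mult_W: "(f,a) \<otimes>\<^bsub>W\<^esub> (g,b) = ((\<lambda>i\<in>I. f i \<otimes> g ((i + p - a) mod p)), (a + b) mod p)"
  by (simp add: wreath_cyclic_def)
lemma one_W: "\<one>\<^bsub>W\<^esub> = ((\<lambda>i\<in>I. \<one>), 0)"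
  by (simp add: wreath_cyclic_def)

lemma mem_W: "(f,a) \<in> carrier W \<longleftrightarrow> f \<in> I \<rightarrow>\<^sub>E carrier B \<and> a < p"
  by (simp add: carrier_W)

lemma fcar: "f \<in> I \<rightarrow>\<^sub>E carrier B \<Longrightarrow> i < p \<Longrightarrow> f i \<in> carrier B" by auto
lemma fext: "f \<in> I \<rightarrow>\<^sub>E carrier B \<Longrightarrow> \<not> i < p \<Longrightarrow> f i = undefined" by auto

lemma rPiE: "(\<And>i. i < p \<Longrightarrow> h i \<in> carrier B) \<Longrightarrow> (\<lambda>i\<in>I. h i) \<in> I \<rightarrow>\<^sub>E carrier B"
  by (rule restrict_PiE_iff[THEN iffD2]) auto

lemma group_W: "group W"
proof (rule groupI)
  show "\<one>\<^bsub>W\<^esub> \<in> carrier W" using p0 by (auto simp: one_W carrier_W)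
next
  fix x y assume "x \<in> carrier W" "y \<in> carrier W"
  then show "x \<otimes>\<^bsub>W\<^esub> y \<in> carrier W"
  proof (cases x; cases y)
    fix f a g b assume xy: "x \<in> carrier W" "y \<in> carrier W" "x = (f,a)" "y = (g,b)"
    then have f: "f \<in> I \<rightarrow>\<^sub>E carrier B" "a < p" and g: "g \<in> I \<rightarrow>\<^sub>E carrier B" "b < p"
      by (auto simp: carrier_W)
    have "(\<lambda>i\<in>I. f i \<otimes> g ((i + p - a) mod p)) \<in> I \<rightarrow>\<^sub>E carrier B"
    proof (rule restrict_PiE_iff[THEN iffD2], intro ballI)
      fix i assume "i \<in> I"
      then show "f i \<otimes> g ((i + p - a) mod p) \<in> carrier B"
        using f g p0 by (intro m_closed fcar[of f] fcar[of g]) auto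
    qed
    then show ?thesis using xy p0 by (simp add: mult_W carrier_W)
  qed
next
  fix x y z assume xyz: "x \<in> carrier W" "y \<in> carrier W" "z \<in> carrier W"
  obtain f a where x: "x = (f,a)" by (cases x)
  obtain g b where y: "y = (g,b)" by (cases y)
  obtain h c where z: "z = (h,c)" by (cases z)
  have f: "f \<in> I \<rightarrow>\<^sub>E carrier B" "a < p" using xyz x by (auto simp: carrier_W)
  have g: "g \<in> I \<rightarrow>\<^sub>E carrier B" "b < p" using xyz y by (auto simp: carrier_W)
  have h: "h \<in> I \<rightarrow>\<^sub>E carrier B" "c < p" using xyz z by (auto simp: carrier_W)
  have e: "(\<lambda>i\<in>I. (\<lambda>i\<in>I. f i \<otimes> g ((i + p - a) mod p)) i \<otimes> h ((i + p - (a + b) mod p) mod p)) =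
         (\<lambda>i\<in>I. f i \<otimes> (\<lambda>i\<in>I. g i \<otimes> h ((i + p - b) mod p)) ((i + p - a) mod p))"
  proof (rule ext)
    fix i show "(\<lambda>i\<in>I. (\<lambda>i\<in>I. f i \<otimes> g ((i + p - a) mod p)) i \<otimes> h ((i + p - (a + b) mod p) mod p)) i =
         (\<lambda>i\<in>I. f i \<otimes> (\<lambda>i\<in>I. g i \<otimes> h ((i + p - b) mod p)) ((i + p - a) mod p)) i"
    proof (cases "i < p")
      case True
      have m: "(i + p - a) mod p < p" using p0 by simp
      have "((i + p - a) mod p + p - b) mod p = (i + p - (a + b) mod p) mod p" using f g by (simp add: sh_sh)
      then show ?thesis using True m f g h p0 by (simp add: m_assoc fcar)
    qed simp
  qed
  have e2: "((a + b) mod p + c) mod p = (a + (b + c) mod p) mod p" by (simp add: mod_add_left_eq mod_add_right_eq add.assoc)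
  show "x \<otimes>\<^bsub>W\<^esub> y \<otimes>\<^bsub>W\<^esub> z = x \<otimes>\<^bsub>W\<^esub> (y \<otimes>\<^bsub>W\<^esub> z)"
    unfolding x y z mult_W using e e2 by simp
next
  fix x assume "x \<in> carrier W"
  then show "\<one>\<^bsub>W\<^esub> \<otimes>\<^bsub>W\<^esub> x = x"
  proof (cases x)
    fix f a assume xx: "x \<in> carrier W" "x = (f,a)"
    then have f: "f \<in> I \<rightarrow>\<^sub>E carrier B" "a < p" by (auto simp: carrier_W)
    have "(\<lambda>i\<in>I. (\<lambda>i\<in>I. \<one>) i \<otimes> f ((i + p - 0) mod p)) = f"
    proof
      fix i show "(\<lambda>i\<in>I. (\<lambda>i\<in>I. \<one>) i \<otimes> f ((i + p - 0) mod p)) i = f i"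
        using f by (cases "i < p") (auto simp: fcar fext)
    qed
    then show ?thesis using xx f by (simp add: one_W mult_W)
  qed
next
  fix x assume x: "x \<in> carrier W"
  obtain f a where xx: "x = (f,a)" by (cases x)
  have f: "f \<in> I \<rightarrow>\<^sub>E carrier B" "a < p" using x xx by (auto simp: carrier_W)
  let ?y = "((\<lambda>i\<in>I. inv (f ((i + a) mod p))), (p - a) mod p)"
  have "?y \<in> carrier W" unfolding mem_W
  proof
    show "(\<lambda>i\<in>I. inv (f ((i + a) mod p))) \<in> I \<rightarrow>\<^sub>E carrier B"
      by (rule rPiE) (use f p0 in \<open>simp add: fcar\<close>)
  qed (use p0 in simp)
  moreover have "?y \<otimes>\<^bsub>W\<^esub> x = \<one>\<^bsub>W\<^esub>"
    unfolding xx mult_W one_W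
  proof (simp only: prod.inject, intro conjI ext)
    fix i show "(\<lambda>i\<in>I. (\<lambda>i\<in>I. inv f ((i + a) mod p)) i \<otimes> f ((i + p - (p - a) mod p) mod p)) i = (\<lambda>i\<in>I. \<one>) i"
    proof (cases "i < p")
      case True
      have "(i + p - (p - a) mod p) mod p = (i + a) mod p"
      proof -
        have "int ((i + p - (p - a) mod p) mod p) = (int i - int ((p - a) mod p)) mod int p"
          using p0 by (intro sh_int) simp
        also have "\<dots> = (int i - (int p - int a)) mod int p"
        proof -
          have "int ((p - a) mod p) = (int p - int a) mod int p" using f by (simp add: of_nat_mod of_nat_diff)
          then show ?thesis by (simp only:) (rule mod_diff_right_eq)
        qed
        also have "\<dots> = ((int i + int a) + (-1) * int p) mod int p" by (simp add: algebra_simps)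
        also have "\<dots> = int ((i + a) mod p)" by (simp only: mod_mult_self1) (simp add: of_nat_mod)
        finally show ?thesis by simp
      qed
      then show ?thesis using True f p0 by (simp add: fcar)
    qed simp
  next
    show "((p - a) mod p + a) mod p = 0" using f by (simp add: mod_add_left_eq)
  qed
  ultimately show "\<exists>y\<in>carrier W. y \<otimes>\<^bsub>W\<^esub> x = \<one>\<^bsub>W\<^esub>" by blast
qed

lemma inv_W: assumes "f \<in> I \<rightarrow>\<^sub>E carrier B" "a < p"
  shows "inv\<^bsub>W\<^esub> (f,a) = ((\<lambda>i\<in>I. inv (f ((i + a) mod p))), (p - a) mod p)"
proof -
  interpret w: group W by (rule group_W)
  let ?y = "((\<lambda>i\<in>I. inv (f ((i + a) mod p))), (p - a) mod p)"
  have y: "?y \<in> carrier W" unfolding mem_W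
  proof
    show "(\<lambda>i\<in>I. inv (f ((i + a) mod p))) \<in> I \<rightarrow>\<^sub>E carrier B"
      by (rule rPiE) (use assms p0 in \<open>simp add: fcar\<close>)
  qed (use p0 in simp)
  have "(f,a) \<otimes>\<^bsub>W\<^esub> ?y = \<one>\<^bsub>W\<^esub>"
    unfolding mult_W one_W
  proof (simp only: prod.inject, intro conjI ext)
    fix i show "(\<lambda>i\<in>I. f i \<otimes> (\<lambda>i\<in>I. inv f ((i + a) mod p)) ((i + p - a) mod p)) i = (\<lambda>i\<in>I. \<one>) i"
    proof (cases "i < p")
      case True
      then show ?thesis using assms p0 by (simp add: fcar sh_inv2)
    qed simp
  next
    show "(a + (p - a) mod p) mod p = 0" using assms by (simp add: mod_add_right_eq)
  qed
  moreover have "(f,a) \<in> carrier W" using assms by (simp add: mem_W)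
  ultimately show ?thesis using y w.inv_equality w.inv_unique' by (metis w.inv_closed w.r_inv)
qed

end


lemma derived_in_kernel:
  assumes G: "group G" and H: "comm_group H" and h: "h \<in> hom G H"
    and x: "x \<in> derived G (carrier G)"
  shows "h x = \<one>\<^bsub>H\<^esub>"
proof -
  interpret G: group G by (rule G)
  interpret H: comm_group H by (rule H)
  interpret gh: group_hom G H h by (unfold_locales) (rule h)
  have "derived G (carrier G) \<subseteq> kernel G H h"
    unfolding derived_def
  proof (rule G.generate_subgroup_incl)
    show "subgroup (kernel G H h) G" by (rule gh.subgroup_kernel)
    show "derived_set G (carrier G) \<subseteq> kernel G H h"
    proof
      fix z assume "z \<in> derived_set G (carrier G)"
      then obtain a b where ab: "a \<in> carrier G" "b \<in> carrier G" "z = a \<otimes>\<^bsub>G\<^esub> b \<otimes>\<^bsub>G\<^esub> inv\<^bsub>G\<^esub> a \<otimes>\<^bsub>G\<^esub> inv\<^bsub>G\<^esub> b"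
        by blast
      have "h z = h a \<otimes>\<^bsub>H\<^esub> h b \<otimes>\<^bsub>H\<^esub> inv\<^bsub>H\<^esub> h a \<otimes>\<^bsub>H\<^esub> inv\<^bsub>H\<^esub> h b"
        using ab by (simp add: gh.hom_inv)
      also have "\<dots> = h a \<otimes>\<^bsub>H\<^esub> (h b \<otimes>\<^bsub>H\<^esub> inv\<^bsub>H\<^esub> h a) \<otimes>\<^bsub>H\<^esub> inv\<^bsub>H\<^esub> h b"
        using ab by (simp add: H.m_assoc)
      also have "\<dots> = h a \<otimes>\<^bsub>H\<^esub> (inv\<^bsub>H\<^esub> h a \<otimes>\<^bsub>H\<^esub> h b) \<otimes>\<^bsub>H\<^esub> inv\<^bsub>H\<^esub> h b"
        using ab by (simp add: H.m_comm)
      also have "\<dots> = (h a \<otimes>\<^bsub>H\<^esub> inv\<^bsub>H\<^esub> h a) \<otimes>\<^bsub>H\<^esub> (h b \<otimes>\<^bsub>H\<^esub> inv\<^bsub>H\<^esub> h b)"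
        using ab by (simp add: H.m_assoc)
      also have "\<dots> = \<one>\<^bsub>H\<^esub>" using ab by simp
      finally show "z \<in> kernel G H h" using ab by (simp add: kernel_def)
    qed
  qed
  then show ?thesis using x by (auto simp: kernel_def)
qed

context wr begin

abbreviation N where "N \<equiv> derived B (carrier B)"
abbreviation Q where "Q \<equiv> B Mod N"
abbreviation kap where "kap a \<equiv> N #> a"

lemma N_normal: "N \<lhd> B" by (rule derived_self_is_normal)

lemma comm_in_N: "x \<in> carrier B \<Longrightarrow> y \<in> carrier B \<Longrightarrow> x \<otimes> y \<otimes> inv x \<otimes> inv y \<in> N"
  unfolding derived_def by (rule generate.incl) blast

lemma comm_Q: "comm_group Q"
proof -
  interpret n: normal N B by (rule N_normal)
  interpret q: group Q by (rule n.factorgroup_is_group)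
  show ?thesis
  proof (rule q.group_comm_groupI)
    fix U V assume "U \<in> carrier Q" "V \<in> carrier Q"
    then obtain x y where x: "x \<in> carrier B" "U = kap x" and y: "y \<in> carrier B" "V = kap y"
      by (auto simp: carrier_FactGroup)
    have "U \<otimes>\<^bsub>Q\<^esub> V = kap (x \<otimes> y)" using n.rcos_sum x y by simp
    also have "\<dots> = kap (y \<otimes> x)"
    proof (rule repr_independence)
      show "subgroup N B" by (rule n.subgroup_axioms)
      show "x \<otimes> y \<in> carrier B" using x y by simp
      have "y \<otimes> x \<otimes> inv (x \<otimes> y) = y \<otimes> x \<otimes> inv y \<otimes> inv x"
        using x y by (simp add: inv_mult_group m_assoc)
      then have "y \<otimes> x \<otimes> inv (x \<otimes> y) \<in> N" using comm_in_N x y by simp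
      then show "y \<otimes> x \<in> kap (x \<otimes> y)"
        using n.rcos_module[OF is_group] x y by simp
    qed
    also have "\<dots> = V \<otimes>\<^bsub>Q\<^esub> U" using n.rcos_sum x y by simp
    finally show "U \<otimes>\<^bsub>Q\<^esub> V = V \<otimes>\<^bsub>Q\<^esub> U" .
  qed
qed

lemma kap_one: "x \<in> carrier B \<Longrightarrow> kap x = \<one>\<^bsub>Q\<^esub> \<longleftrightarrow> x \<in> N"
proof -
  interpret n: normal N B by (rule N_normal)
  assume x: "x \<in> carrier B"
  show ?thesis
  proof
    assume "kap x = \<one>\<^bsub>Q\<^esub>"
    then have "kap x = N" by simp
    then show "x \<in> N" using rcos_self[OF x n.subgroup_axioms] by simp
  next
    assume "x \<in> N" then show "kap x = \<one>\<^bsub>Q\<^esub>" using n.rcos_const[OF is_group] by simp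
  qed
qed

lemma kap_hom: "kap \<in> hom B Q"
proof -
  interpret n: normal N B by (rule N_normal)
  show ?thesis by (rule n.r_coset_hom_Mod)
qed

lemma kap_car: "x \<in> carrier B \<Longrightarrow> kap x \<in> carrier Q"
  using kap_hom by (auto simp: hom_def)
lemma kap_mult: "x \<in> carrier B \<Longrightarrow> y \<in> carrier B \<Longrightarrow> kap (x \<otimes> y) = kap x \<otimes>\<^bsub>Q\<^esub> kap y"
  using kap_hom by (auto simp: hom_def)

definition Phi where "Phi w = finprod Q (\<lambda>i. kap (fst w i)) I"

lemma sh_bij: assumes "a < p" shows "(\<lambda>i. (i + p - a) mod p) ` I = I" "inj_on (\<lambda>i. (i + p - a) mod p) I"
proof -
  show "inj_on (\<lambda>i. (i + p - a) mod p) I"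
  proof
    fix i j assume ij: "i \<in> I" "j \<in> I" "(i + p - a) mod p = (j + p - a) mod p"
    have "i = (((i + p - a) mod p) + a) mod p" using sh_inv2[OF assms, of i] ij by simp
    also have "\<dots> = (((j + p - a) mod p) + a) mod p" using ij by simp
    also have "\<dots> = j" using sh_inv2[OF assms, of j] ij by simp
    finally show "i = j" .
  qed
  show "(\<lambda>i. (i + p - a) mod p) ` I = I"
  proof
    show "(\<lambda>i. (i + p - a) mod p) ` I \<subseteq> I" using p0 by auto
    show "I \<subseteq> (\<lambda>i. (i + p - a) mod p) ` I"
    proof
      fix j assume j: "j \<in> I"
      then have "j = ((j + a) mod p + p - a) mod p" using sh_inv[OF assms, of j] by simp
      moreover have "(j + a) mod p \<in> I" using p0 by simp
      ultimately show "j \<in> (\<lambda>i. (i + p - a) mod p) ` I" by blast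
    qed
  qed
qed

lemma Phi_hom: "Phi \<in> hom W Q"
proof -
  interpret q: comm_group Q by (rule comm_Q)
  show ?thesis
  proof (rule homI)
    fix w assume "w \<in> carrier W"
    then obtain f a where w: "w = (f,a)" "f \<in> I \<rightarrow>\<^sub>E carrier B" "a < p" by (auto simp: carrier_W)
    show "Phi w \<in> carrier Q" unfolding Phi_def
      by (rule q.finprod_closed) (use w in \<open>auto intro!: kap_car\<close>)
  next
    fix v w assume "v \<in> carrier W" "w \<in> carrier W"
    then obtain f a g b where v: "v = (f,a)" "f \<in> I \<rightarrow>\<^sub>E carrier B" "a < p"
      and w: "w = (g,b)" "g \<in> I \<rightarrow>\<^sub>E carrier B" "b < p" by (auto simp: carrier_W)
    have fQ: "(\<lambda>i. kap (f i)) \<in> I \<rightarrow> carrier Q" using v by (auto intro!: kap_car)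
    have gQ: "(\<lambda>i. kap (g i)) \<in> I \<rightarrow> carrier Q" using w by (auto intro!: kap_car)
    have gQ': "(\<lambda>i. kap (g ((i + p - a) mod p))) \<in> I \<rightarrow> carrier Q" using w p0 by (auto intro!: kap_car)
    have "Phi (v \<otimes>\<^bsub>W\<^esub> w) = finprod Q (\<lambda>i. kap (f i) \<otimes>\<^bsub>Q\<^esub> kap (g ((i + p - a) mod p))) I"
      unfolding v w mult_W Phi_def fst_conv
    proof (rule q.finprod_cong')
      show "(\<lambda>i. kap (f i) \<otimes>\<^bsub>Q\<^esub> kap (g ((i + p - a) mod p))) \<in> I \<rightarrow> carrier Q"
        using fQ gQ' by (auto intro!: q.m_closed simp del: mult_FactGroup)
      fix i assume "i \<in> I"
      then show "kap ((\<lambda>i\<in>I. f i \<otimes> g ((i + p - a) mod p)) i) = kap (f i) \<otimes>\<^bsub>Q\<^esub> kap (g ((i + p - a) mod p))"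
        using v w p0 by (simp del: mult_FactGroup add: kap_mult fcar)
    qed simp
    also have "\<dots> = Phi v \<otimes>\<^bsub>Q\<^esub> finprod Q (\<lambda>i. kap (g ((i + p - a) mod p))) I"
      unfolding Phi_def v using fQ gQ' by (simp del: mult_FactGroup add: q.finprod_multf)
    also have "finprod Q (\<lambda>i. kap (g ((i + p - a) mod p))) I = finprod Q (\<lambda>i. kap (g i)) ((\<lambda>i. (i + p - a) mod p) ` I)"
      using q.finprod_reindex[of "\<lambda>i. kap (g i)" "\<lambda>i. (i + p - a) mod p" I] sh_bij[OF v(3)] gQ by simp
    also have "\<dots> = Phi w" unfolding Phi_def w using sh_bij[OF v(3)] by simp
    finally show "Phi (v \<otimes>\<^bsub>W\<^esub> w) = Phi v \<otimes>\<^bsub>Q\<^esub> Phi w" .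
  qed
qed

definition psi where "psi w = int (snd w)"

lemma comm_Zp: "comm_group (integer_mod_group p)"
  by (rule group.group_comm_groupI) (auto simp: add.commute)

lemma psi_hom: "psi \<in> hom W (integer_mod_group p)"
proof (rule homI)
  fix w assume "w \<in> carrier W" then show "psi w \<in> carrier (integer_mod_group p)"
    using p0 by (auto simp: carrier_W psi_def carrier_integer_mod_group)
next
  fix v w assume "v \<in> carrier W" "w \<in> carrier W"
  then show "psi (v \<otimes>\<^bsub>W\<^esub> w) = psi v \<otimes>\<^bsub>integer_mod_group p\<^esub> psi w"
    by (cases v; cases w) (simp add: mult_W psi_def of_nat_mod)
qed

lemma derived_W:
  assumes "w \<in> derived W (carrier W)"
  shows "\<exists>f. w = (f, 0) \<and> f \<in> I \<rightarrow>\<^sub>E carrier B \<and> finprod Q (\<lambda>i. kap (f i)) I = \<one>\<^bsub>Q\<^esub>"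
proof -
  interpret w: group W by (rule group_W)
  have "w \<in> carrier W" using assms w.derived_in_carrier by blast
  then obtain f a where w: "w = (f,a)" "f \<in> I \<rightarrow>\<^sub>E carrier B" "a < p" by (auto simp: carrier_W)
  have "psi w = 0" using derived_in_kernel[OF group_W comm_Zp psi_hom assms] by simp
  then have "a = 0" using w by (simp add: psi_def)
  moreover have "Phi w = \<one>\<^bsub>Q\<^esub>" using derived_in_kernel[OF group_W comm_Q Phi_hom assms] .
  ultimately show ?thesis using w by (auto simp: Phi_def)
qed

end


lemma (in group) cancel1: "x \<in> carrier G \<Longrightarrow> y \<in> carrier G \<Longrightarrow> x \<otimes> (inv x \<otimes> y) = y"
  by (simp add: m_assoc[symmetric])
lemma (in group) cancel2: "x \<in> carrier G \<Longrightarrow> y \<in> carrier G \<Longrightarrow> inv x \<otimes> (x \<otimes> y) = y"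
  by (simp add: m_assoc[symmetric])

lemma cp_carrier: "group G \<Longrightarrow> c \<in> comm_prods G k \<Longrightarrow> c \<in> carrier G"
proof (induction k arbitrary: c)
  case 0 then show ?case by (simp add: group.is_monoid monoid.one_closed)
next
  case (Suc k)
  then obtain d x y where "c = d \<otimes>\<^bsub>G\<^esub> commutator G x y" "d \<in> comm_prods G k" "x \<in> carrier G" "y \<in> carrier G" by auto
  then show ?case using Suc by (simp add: commutator_def group.inv_closed group.is_monoid monoid.m_closed)
qed

lemma cp_hom:
  assumes G: "group G" and H: "group H" and h: "h \<in> hom G H"
  shows "c \<in> comm_prods G k \<Longrightarrow> h c \<in> comm_prods H k"
proof (induction k arbitrary: c)
  interpret G: group G by (rule G)
  interpret H: group H by (rule H)
  interpret gh: group_hom G H h by (unfold_locales) (rule h)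
  case 0 then show ?case by simp
next
  interpret G: group G by (rule G)
  interpret H: group H by (rule H)
  interpret gh: group_hom G H h by (unfold_locales) (rule h)
  case (Suc k)
  then obtain d x y where dxy: "c = d \<otimes>\<^bsub>G\<^esub> commutator G x y" "d \<in> comm_prods G k" "x \<in> carrier G" "y \<in> carrier G" by auto
  have d: "d \<in> carrier G" using cp_carrier[OF G dxy(2)] .
  have "h c = h d \<otimes>\<^bsub>H\<^esub> commutator H (h x) (h y)"
    using dxy d by (simp add: commutator_def gh.hom_inv)
  moreover have "h x \<in> carrier H" "h y \<in> carrier H" using dxy by auto
  ultimately show ?case using Suc.IH[OF dxy(2)] by auto
qed

lemma cp_mono1: assumes "group G" shows "c \<in> comm_prods G k \<Longrightarrow> c \<in> comm_prods G (Suc k)"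
proof -
  interpret G: group G by (rule assms)
  assume c: "c \<in> comm_prods G k"
  have "c = c \<otimes>\<^bsub>G\<^esub> commutator G \<one>\<^bsub>G\<^esub> \<one>\<^bsub>G\<^esub>"
    using cp_carrier[OF assms c] by (simp add: commutator_def)
  then show ?thesis using c by auto
qed

lemma cp_mono: assumes "group G" "k \<le> m" "c \<in> comm_prods G k" shows "c \<in> comm_prods G m"
  using assms(2,3)
proof (induction m)
  case 0 then show ?case by simp
next
  case (Suc m)
  then show ?case using cp_mono1[OF assms(1)] by (cases "k = Suc m") auto
qed

lemma cp_mult: assumes G: "group G" and c: "c \<in> comm_prods G m"
  shows "d \<in> comm_prods G n \<Longrightarrow> c \<otimes>\<^bsub>G\<^esub> d \<in> comm_prods G (m + n)"
proof (induction n arbitrary: d)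
  interpret G: group G by (rule G)
  case 0 then have "d = \<one>\<^bsub>G\<^esub>" by simp
  then show ?case using cp_carrier[OF G c] c by simp
next
  interpret G: group G by (rule G)
  case (Suc n)
  then obtain e x y where exy: "d = e \<otimes>\<^bsub>G\<^esub> commutator G x y" "e \<in> comm_prods G n" "x \<in> carrier G" "y \<in> carrier G" by auto
  have "c \<otimes>\<^bsub>G\<^esub> d = (c \<otimes>\<^bsub>G\<^esub> e) \<otimes>\<^bsub>G\<^esub> commutator G x y"
    using exy cp_carrier[OF G c] cp_carrier[OF G exy(2)] by (simp add: commutator_def G.m_assoc)
  then show ?case using Suc.IH[OF exy(2)] exy by auto
qed

lemma derived_cp: assumes G: "group G" and g: "g \<in> derived G (carrier G)"
  shows "\<exists>k. g \<in> comm_prods G k"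
proof -
  interpret G: group G by (rule G)
  have c1: "x \<otimes>\<^bsub>G\<^esub> y \<otimes>\<^bsub>G\<^esub> inv\<^bsub>G\<^esub> x \<otimes>\<^bsub>G\<^esub> inv\<^bsub>G\<^esub> y \<in> comm_prods G 1"
    if "x \<in> carrier G" "y \<in> carrier G" for x y
  proof -
    have "x \<otimes>\<^bsub>G\<^esub> y \<otimes>\<^bsub>G\<^esub> inv\<^bsub>G\<^esub> x \<otimes>\<^bsub>G\<^esub> inv\<^bsub>G\<^esub> y = \<one>\<^bsub>G\<^esub> \<otimes>\<^bsub>G\<^esub> commutator G x y"
      using that by (simp add: commutator_def)
    then show ?thesis using that by auto
  qed
  from g show ?thesis unfolding derived_def
  proof (induction rule: generate.induct)
    case one
    then show ?case by (metis comm_prods.simps(1) singletonI)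
  next
    case (incl h) then show ?case using c1 by blast
  next
    case (inv h)
    then obtain x y where xy: "x \<in> carrier G" "y \<in> carrier G" "h = x \<otimes>\<^bsub>G\<^esub> y \<otimes>\<^bsub>G\<^esub> inv\<^bsub>G\<^esub> x \<otimes>\<^bsub>G\<^esub> inv\<^bsub>G\<^esub> y" by blast
    have "inv\<^bsub>G\<^esub> h = y \<otimes>\<^bsub>G\<^esub> x \<otimes>\<^bsub>G\<^esub> inv\<^bsub>G\<^esub> y \<otimes>\<^bsub>G\<^esub> inv\<^bsub>G\<^esub> x"
      using xy by (simp add: G.inv_mult_group G.m_assoc)
    then show ?case using c1 xy by metis
  next
    case (eng h1 h2)
    then obtain k1 k2 where "h1 \<in> comm_prods G k1" "h2 \<in> comm_prods G k2" by blast
    then show ?case using cp_mult[OF G] by blast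
  qed
qed

lemma cl_le: "g \<in> comm_prods G k \<Longrightarrow> comm_length G g \<le> k"
  unfolding comm_length_def by (rule Least_le)

lemma cl_mem: "\<exists>k. g \<in> comm_prods G k \<Longrightarrow> g \<in> comm_prods G (comm_length G g)"
  unfolding comm_length_def by (rule LeastI_ex)

lemma conj_hom: assumes "group G" "g \<in> carrier G"
  shows "(\<lambda>x. g \<otimes>\<^bsub>G\<^esub> x \<otimes>\<^bsub>G\<^esub> inv\<^bsub>G\<^esub> g) \<in> hom G G"
proof -
  interpret G: group G by (rule assms(1))
  show ?thesis
  proof (rule homI)
    fix x y assume "x \<in> carrier G" "y \<in> carrier G"
    then show "g \<otimes>\<^bsub>G\<^esub> (x \<otimes>\<^bsub>G\<^esub> y) \<otimes>\<^bsub>G\<^esub> inv\<^bsub>G\<^esub> g =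
      g \<otimes>\<^bsub>G\<^esub> x \<otimes>\<^bsub>G\<^esub> inv\<^bsub>G\<^esub> g \<otimes>\<^bsub>G\<^esub> (g \<otimes>\<^bsub>G\<^esub> y \<otimes>\<^bsub>G\<^esub> inv\<^bsub>G\<^esub> g)"
      using assms by (simp add: G.m_assoc G.cancel2)
  qed (use assms in simp)
qed



primrec rprod :: "('a, 'b) monoid_scheme \<Rightarrow> (nat \<Rightarrow> 'a) \<Rightarrow> nat \<Rightarrow> 'a" where
  "rprod G f 0 = \<one>\<^bsub>G\<^esub>"
| "rprod G f (Suc k) = f k \<otimes>\<^bsub>G\<^esub> rprod G f k"

context wr begin

lemma rprod_car_kap: "(\<And>i. i < k \<Longrightarrow> f i \<in> carrier B) \<Longrightarrow>
  rprod B f k \<in> carrier B \<and> kap (rprod B f k) = finprod Q (\<lambda>i. kap (f i)) {0..<k}"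
proof (induction k)
  interpret q: comm_group Q by (rule comm_Q)
  case 0
  interpret n: normal N B by (rule N_normal)
  show ?case using n.rcos_const[OF is_group] by simp
next
  interpret q: comm_group Q by (rule comm_Q)
  case (Suc k)
  then have ih: "rprod B f k \<in> carrier B" "kap (rprod B f k) = finprod Q (\<lambda>i. kap (f i)) {0..<k}"
    and fk: "f k \<in> carrier B" by auto
  have fQ: "(\<lambda>i. kap (f i)) \<in> {0..<k} \<rightarrow> carrier Q" using Suc.prems by (auto intro!: kap_car)
  have "kap (rprod B f (Suc k)) = kap (f k) \<otimes>\<^bsub>Q\<^esub> kap (rprod B f k)"
    using ih fk by (simp del: mult_FactGroup add: kap_mult)
  also have "\<dots> = finprod Q (\<lambda>i. kap (f i)) (insert k {0..<k})"
    using ih fQ fk kap_car by (simp del: mult_FactGroup add: q.finprod_insert)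
  also have "insert k {0..<k} = {0..<Suc k}" by auto
  finally show ?case using ih fk by simp
qed

definition iota where "iota b = ((\<lambda>i\<in>I. if i = 0 then b else \<one>), 0::nat)"

lemma iota_hom: "iota \<in> hom B W"
proof (rule homI)
  fix b assume b: "b \<in> carrier B"
  show "iota b \<in> carrier W" unfolding iota_def mem_W
    using b p0 by (auto intro!: rPiE)
next
  fix u v assume uv: "u \<in> carrier B" "v \<in> carrier B"
  show "iota (u \<otimes> v) = iota u \<otimes>\<^bsub>W\<^esub> iota v"
    unfolding iota_def mult_W
  proof (simp only: prod.inject, intro conjI restrict_ext)
    fix i assume "i \<in> I"
    then show "(if i = 0 then u \<otimes> v else \<one>) =
      (\<lambda>i\<in>I. if i = 0 then u else \<one>) i \<otimes> (\<lambda>i\<in>I. if i = 0 then v else \<one>) ((i + p - 0) mod p)"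
      using uv by simp
  qed simp
qed

lemma comm_XY:
  assumes x: "x \<in> I \<rightarrow>\<^sub>E carrier B" and y: "y \<in> I \<rightarrow>\<^sub>E carrier B"
  shows "commutator W (x, 0) (y, 1) =
    ((\<lambda>i\<in>I. x i \<otimes> y i \<otimes> inv (x ((i + p - 1) mod p)) \<otimes> inv (y i)), 0)"
proof -
  have p1: "1 < p" using p2 by simp
  have h1: "(x, 0) \<otimes>\<^bsub>W\<^esub> (y, 1) = ((\<lambda>i\<in>I. x i \<otimes> y i), 1)"
    unfolding mult_W using p1 by (auto intro!: restrict_ext)
  have h2: "inv\<^bsub>W\<^esub> (x, 0) = ((\<lambda>i\<in>I. inv (x i)), 0)"
    using inv_W[OF x] p0 by (auto intro!: restrict_ext)
  have h3: "((\<lambda>i\<in>I. x i \<otimes> y i), 1) \<otimes>\<^bsub>W\<^esub> ((\<lambda>i\<in>I. inv (x i)), 0) =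
      ((\<lambda>i\<in>I. x i \<otimes> y i \<otimes> inv (x ((i + p - 1) mod p))), 1)"
    unfolding mult_W using p1 by (auto intro!: restrict_ext)
  have h4: "inv\<^bsub>W\<^esub> (y, 1) = ((\<lambda>i\<in>I. inv (y ((i + 1) mod p))), p - 1)"
    using inv_W[OF y] p1 by simp
  have h5: "((\<lambda>i\<in>I. x i \<otimes> y i \<otimes> inv (x ((i + p - 1) mod p))), 1) \<otimes>\<^bsub>W\<^esub> ((\<lambda>i\<in>I. inv (y ((i + 1) mod p))), p - 1)
     = ((\<lambda>i\<in>I. x i \<otimes> y i \<otimes> inv (x ((i + p - 1) mod p)) \<otimes> inv (y i)), 0)"
    unfolding mult_W
  proof (simp only: prod.inject, intro conjI restrict_ext)
    fix i assume i: "i \<in> I"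
    have "((i + p - 1) mod p + 1) mod p = i" using sh_inv2[OF p1, of i] i by simp
    then show "(\<lambda>i\<in>I. x i \<otimes> y i \<otimes> inv x ((i + p - 1) mod p)) i \<otimes> (\<lambda>i\<in>I. inv y ((i + 1) mod p)) ((i + p - 1) mod p)
       = x i \<otimes> y i \<otimes> inv x ((i + p - 1) mod p) \<otimes> inv y i" using i p0 by simp
  next
    show "(1 + (p - 1)) mod p = 0" using p1 by simp
  qed
  show ?thesis unfolding commutator_def h1 h2 h3 h4 h5 ..
qed

end


context wr begin

lemma alg0:
  assumes c: "c \<in> carrier B" and t: "t \<in> carrier B" and b: "b \<in> carrier B" and f0: "f0 \<in> carrier B"
  shows "((f0 \<otimes> inv (t \<otimes> b \<otimes> inv t \<otimes> inv b)) \<otimes> c \<otimes> inv (f0 \<otimes> inv (t \<otimes> b \<otimes> inv t \<otimes> inv b))) \<otimes>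
     (f0 \<otimes> inv (c \<otimes> (t \<otimes> b \<otimes> inv t \<otimes> inv b)) \<otimes> t \<otimes> b \<otimes> inv t \<otimes> inv b) = f0"
  using assms by (simp add: m_assoc inv_mult_group cancel1 cancel2)

lemma alg1:
  assumes "a \<in> carrier B" "r \<in> carrier B" "e \<in> carrier B" "t \<in> carrier B"
  shows "\<one> \<otimes> ((a \<otimes> r) \<otimes> e \<otimes> t \<otimes> \<one> \<otimes> inv (r \<otimes> e \<otimes> t) \<otimes> inv \<one>) = a"
  using assms by (simp add: m_assoc inv_mult_group cancel1 cancel2)

lemma key:
  assumes f: "f \<in> I \<rightarrow>\<^sub>E carrier B" and E: "rprod B f p \<in> comm_prods B (Suc k)"
  shows "(f, 0) \<in> comm_prods W (Suc k)"
proof -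
  interpret w: group W by (rule group_W)
  define E where "E = rprod B f p"
  obtain c t b where ctb: "E = c \<otimes> commutator B t b" "c \<in> comm_prods B k" "t \<in> carrier B" "b \<in> carrier B"
    using E unfolding E_def by auto
  have c: "c \<in> carrier B" using cp_carrier[OF is_group ctb(2)] .
  have f0: "f 0 \<in> carrier B" using f p0 by (simp add: fcar)
  have rp: "rprod B f j \<in> carrier B" if "j \<le> p" for j
  proof -
    have "\<And>i. i < j \<Longrightarrow> f i \<in> carrier B" using f that fcar[of f] by simp
    then show ?thesis using rprod_car_kap[of j f] by blast
  qed
  have Ec: "E \<in> carrier B" using rp[of p] by (simp add: E_def)
  define q where "q = commutator B t b"
  have qc: "q \<in> carrier B" using ctb by (simp add: q_def commutator_def)
  define hh where "hh = f 0 \<otimes> inv q"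
  have hhc: "hh \<in> carrier B" using f0 qc by (simp add: hh_def)
  define L where "L = hh \<otimes> c \<otimes> inv hh"
  have L: "L \<in> comm_prods B k"
    unfolding L_def using cp_hom[OF is_group is_group conj_hom[OF is_group hhc] ctb(2)] by simp
  define x where "x = (\<lambda>i\<in>I. rprod B f (Suc i) \<otimes> inv E \<otimes> t)"
  define y where "y = (\<lambda>i\<in>I. if i = 0 then b else \<one>)"
  have xc: "x \<in> I \<rightarrow>\<^sub>E carrier B" unfolding x_def
  proof (rule rPiE)
    fix i assume "i < p"
    then have "Suc i \<le> p" by simp
    then have "rprod B f (Suc i) \<in> carrier B" using rp by blast
    then show "rprod B f (Suc i) \<otimes> inv E \<otimes> t \<in> carrier B" using Ec ctb by (simp del: rprod.simps)
  qed
  have yc: "y \<in> I \<rightarrow>\<^sub>E carrier B" unfolding y_def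
    by (rule rPiE) (use ctb in simp)
  have XW: "(x, 0) \<in> carrier W" "(y, 1) \<in> carrier W" using xc yc p2 by (auto simp: mem_W)
  have iL: "iota L \<in> comm_prods W k"
    using cp_hom[OF is_group group_W iota_hom L] .
  have eq: "(f, 0) = iota L \<otimes>\<^bsub>W\<^esub> commutator W (x, 0) (y, 1)"
    unfolding comm_XY[OF xc yc] iota_def mult_W
  proof (simp only: prod.inject, intro conjI ext)
    fix i
    show "f i = (\<lambda>i\<in>I. (\<lambda>i\<in>I. if i = 0 then L else \<one>) i \<otimes>
          (\<lambda>i\<in>I. x i \<otimes> y i \<otimes> inv x ((i + p - 1) mod p) \<otimes> inv y i) ((i + p - 0) mod p)) i"
    proof (cases "i < p")
      case False then show ?thesis using f by (simp add: fext)
    next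
      case True
      show ?thesis
      proof (cases "i = 0")
        case True
        have pm: "(0 + p - 1) mod p = p - 1" "Suc (p - 1) = p" using p2 by auto
        have x0: "x 0 = f 0 \<otimes> inv E \<otimes> t" using p0 f0 by (simp add: x_def)
        have "x (p - 1) = rprod B f (Suc (p - 1)) \<otimes> inv E \<otimes> t" using p0 by (simp add: x_def del: rprod.simps)
        also have "\<dots> = E \<otimes> inv E \<otimes> t" using pm(2) by (simp add: E_def del: rprod.simps)
        also have "\<dots> = t" using Ec ctb by simp
        finally have xp: "x (p - 1) = t" .
        have "x 0 \<otimes> y 0 \<otimes> inv x (p - 1) \<otimes> inv y 0 = f 0 \<otimes> inv E \<otimes> t \<otimes> b \<otimes> inv t \<otimes> inv b"
          unfolding x0 xp using p0 Ec ctb f0 by (simp add: y_def)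
        then have "L \<otimes> (x 0 \<otimes> y 0 \<otimes> inv x (p - 1) \<otimes> inv y 0) = f 0"
          using alg0[OF c ctb(3) ctb(4) f0] ctb(1) unfolding L_def hh_def q_def commutator_def by simp
        then show ?thesis using True p0 pm by simp
      next
        case False
        have e1: "i + p - 1 = (i - 1) + p" using False by simp
        have "(i + p - 1) mod p = ((i - 1) + p) mod p" unfolding e1 ..
        also have "\<dots> = i - 1" using \<open>i < p\<close> by simp
        finally have pm: "(i + p - 1) mod p = i - 1" "Suc (i - 1) = i" using False by auto
        have "x i \<otimes> y i \<otimes> inv x (i - 1) \<otimes> inv y i = (f i \<otimes> rprod B f i) \<otimes> inv E \<otimes> t \<otimes> \<one> \<otimes> inv (rprod B f i \<otimes> inv E \<otimes> t) \<otimes> inv \<one>"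
        proof -
          have xi: "x i = (f i \<otimes> rprod B f i) \<otimes> inv E \<otimes> t" using \<open>i < p\<close> by (simp add: x_def)
          have "i - 1 \<in> I" using \<open>i < p\<close> by simp
          then have "x (i - 1) = rprod B f (Suc (i - 1)) \<otimes> inv E \<otimes> t" unfolding x_def by (rule restrict_apply')
          then have xi1: "x (i - 1) = rprod B f i \<otimes> inv E \<otimes> t" unfolding pm(2) .
          show ?thesis unfolding xi xi1 using False \<open>i < p\<close> by (simp add: y_def)
        qed
        also have "\<one> \<otimes> \<dots> = f i"
          using alg1[of "f i" "rprod B f i" "inv E" t] f \<open>i < p\<close> rp[of i] Ec ctb by (simp add: fcar)
        finally show ?thesis using False \<open>i < p\<close> pm by simp
      qed
    qed
  qed simp
  have "iota L \<otimes>\<^bsub>W\<^esub> commutator W (x, 0) (y, 1) \<in> comm_prods W (Suc k)"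
    unfolding comm_prods.simps using iL XW by blast
  then show ?thesis using eq by simp
qed

end


theorem mainTheorem5:
  fixes B :: "('a, 'b) monoid_scheme" and p :: nat
  assumes "group B" and "p \<ge> 2"
  shows "comm_width (wreath_cyclic B p) \<le> max 1 (comm_width B)"
proof -
  interpret wr B p by (intro wr.intro wr_axioms.intro assms)
  show ?thesis
  proof (cases "comm_width B")
    case infinity then show ?thesis by simp
  next
    case (enat n)
    define m where "m = max 1 n"
    have m1: "Suc (m - 1) = m" by (simp add: m_def)
    have "comm_width W \<le> enat m" unfolding comm_width_def
    proof (rule SUP_least)
      fix g assume g: "g \<in> derived W (carrier W)"
      obtain f where f: "g = (f,0)" "f \<in> I \<rightarrow>\<^sub>E carrier B" "finprod Q (\<lambda>i. kap (f i)) I = \<one>\<^bsub>Q\<^esub>"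
        using derived_W[OF g] by blast
      have fi: "\<And>i. i < p \<Longrightarrow> f i \<in> carrier B" using f(2) fcar by blast
      have "rprod B f p \<in> carrier B" "kap (rprod B f p) = \<one>\<^bsub>Q\<^esub>"
        using rprod_car_kap[of p f, OF fi] f(3) by auto
      then have EN: "rprod B f p \<in> N" using kap_one by blast
      have ex: "\<exists>k. rprod B f p \<in> comm_prods B k" using derived_cp[OF is_group EN] .
      have "enat (comm_length B (rprod B f p)) \<le> comm_width B" unfolding comm_width_def
        by (rule SUP_upper[OF EN])
      then have "comm_length B (rprod B f p) \<le> m" using enat by (simp add: m_def)
      then have "rprod B f p \<in> comm_prods B (Suc (m - 1))"
        unfolding m1 using cp_mono[OF is_group _ cl_mem[OF ex]] by blast
      then have "g \<in> comm_prods W (Suc (m - 1))" using key f by simp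
      then have "comm_length W g \<le> m" using cl_le m1 by metis
      then show "enat (comm_length W g) \<le> enat m" by simp
    qed
    moreover have "max 1 (comm_width B) = enat m" using enat by (simp add: m_def one_enat_def)
    ultimately show ?thesis by simp
  qed
qed


end
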